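(* For every $k\ge1$, the number of $\tau\in\mathcal{S}_k$ with $\mathcal{J}(\tau)=\{0,1,\ldots,k\}$ equals $2^{k-1}$.
   Context: The pattern of a word of $j$ distinct letters is its order-preserving relabeling by $\{1,\ldots,j\}$; the length-$j$ initial pattern of $\tau$ is the pattern of $\tau_1\ldots\tau_j$. The $j$-set $\mathcal{J}(\tau)$ of $\tau\in\mathcal{S}_k$ is the set consisting of $0$ together with all $j\in\{1,\ldots,k\}$ such that the length-$j$ initial pattern of $\tau$ is an involution in $\mathcal{S}_j$. *)

theory Defs
  imports "HOL-Combinatorics.Permutations"
begin

text \<open>Permutations of S_k are functions nat to nat permuting {1..k} (one-line notation
  tau 1, ..., tau k).  The pattern of the word tau 1 ... tau j of distinct letters is its
  order-preserving relabeling by {1..j}: position i gets the rank of tau i among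
  tau 1, ..., tau j.\<close>

definition initial_pattern :: "(nat \<Rightarrow> nat) \<Rightarrow> nat \<Rightarrow> nat \<Rightarrow> nat" where
  "initial_pattern \<tau> j = (\<lambda>i. if i \<in> {1..j} then card {l \<in> {1..j}. \<tau> l \<le> \<tau> i} else i)"

definition is_involution_on :: "nat set \<Rightarrow> (nat \<Rightarrow> nat) \<Rightarrow> bool" where
  "is_involution_on A \<sigma> \<longleftrightarrow> \<sigma> permutes A \<and> (\<forall>i\<in>A. \<sigma> (\<sigma> i) = i)"

definition jset :: "nat \<Rightarrow> (nat \<Rightarrow> nat) \<Rightarrow> nat set" where
  "jset k \<tau> = {0} \<union> {j \<in> {1..k}. is_involution_on {1..j} (initial_pattern \<tau> j)}"

end

theory Submission
  imports Defs
begin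

definition rk :: "(nat \<Rightarrow> nat) \<Rightarrow> nat \<Rightarrow> nat \<Rightarrow> nat" where
  "rk \<tau> j i = card {l \<in> {1..j}. \<tau> l \<le> \<tau> i}"

definition good :: "nat \<Rightarrow> (nat \<Rightarrow> nat) \<Rightarrow> bool" where
  "good k \<tau> \<longleftrightarrow> (\<forall>j\<in>{1..k}. \<forall>i\<in>{1..j}. rk \<tau> j (rk \<tau> j i) = i)"

definition PP :: "nat \<Rightarrow> (nat \<Rightarrow> nat) set" where
  "PP k = {\<tau>. \<tau> permutes {1..k} \<and> good k \<tau>}"

definition blk :: "nat \<Rightarrow> nat \<Rightarrow> (nat \<Rightarrow> nat) \<Rightarrow> nat \<Rightarrow> nat" where
  "blk k m \<sigma> = (\<lambda>i. if i < m then \<sigma> i else if i \<le> k then k + m - i else i)"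

lemma rk_bounds:
  assumes "i \<in> {1..j}" shows "rk \<tau> j i \<in> {1..j}"
proof -
  have s: "{l \<in> {1..j}. \<tau> l \<le> \<tau> i} \<subseteq> {1..j}" by auto
  have f: "finite {l \<in> {1..j}. \<tau> l \<le> \<tau> i}" by simp
  have "card {l \<in> {1..j}. \<tau> l \<le> \<tau> i} \<le> card {1..j}" by (rule card_mono[OF _ s]) simp
  then have "rk \<tau> j i \<le> j" unfolding rk_def by simp
  moreover have "i \<in> {l \<in> {1..j}. \<tau> l \<le> \<tau> i}" using assms by auto
  then have "card {l \<in> {1..j}. \<tau> l \<le> \<tau> i} > 0" using f card_gt_0_iff by blast
  then have "rk \<tau> j i \<ge> 1" unfolding rk_def by simp
  ultimately show ?thesis by auto
qed

lemma invol_permutes: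
  assumes "\<And>x. x \<notin> S \<Longrightarrow> p x = x" "\<And>x. x \<in> S \<Longrightarrow> p x \<in> S" "\<And>x. x \<in> S \<Longrightarrow> p (p x) = x"
  shows "p permutes S"
  unfolding permutes_def
proof (intro conjI allI impI)
  fix y
  show "\<exists>!x. p x = y"
  proof (cases "y \<in> S")
    case True
    then show ?thesis using assms by (metis)
  next
    case False
    then show ?thesis using assms by metis
  qed
qed (use assms in auto)

lemma inv_iff:
  "is_involution_on {1..j} (initial_pattern \<tau> j) \<longleftrightarrow> (\<forall>i\<in>{1..j}. rk \<tau> j (rk \<tau> j i) = i)"
proof -
  have e: "\<And>i. i \<in> {1..j} \<Longrightarrow> initial_pattern \<tau> j i = rk \<tau> j i"
    unfolding initial_pattern_def rk_def by auto
  have n: "\<And>i. i \<notin> {1..j} \<Longrightarrow> initial_pattern \<tau> j i = i"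
    unfolding initial_pattern_def by auto
  have c: "(\<forall>i\<in>{1..j}. initial_pattern \<tau> j (initial_pattern \<tau> j i) = i) \<longleftrightarrow> (\<forall>i\<in>{1..j}. rk \<tau> j (rk \<tau> j i) = i)"
    using e rk_bounds by metis
  show ?thesis
  proof
    assume H: "is_involution_on {1..j} (initial_pattern \<tau> j)"
    then show "\<forall>i\<in>{1..j}. rk \<tau> j (rk \<tau> j i) = i" using c unfolding is_involution_on_def by blast
  next
    assume H: "\<forall>i\<in>{1..j}. rk \<tau> j (rk \<tau> j i) = i"
    have ii: "\<And>i. i \<in> {1..j} \<Longrightarrow> initial_pattern \<tau> j (initial_pattern \<tau> j i) = i"
      using c H by blast
    have "initial_pattern \<tau> j permutes {1..j}"
      by (rule invol_permutes) (use n ii e rk_bounds in auto)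
    then show "is_involution_on {1..j} (initial_pattern \<tau> j)"
      unfolding is_involution_on_def using ii by auto
  qed
qed

lemma jset_mem: "j \<in> jset k \<tau> \<longleftrightarrow> j = 0 \<or> (j \<in> {1..k} \<and> is_involution_on {1..j} (initial_pattern \<tau> j))"
  unfolding jset_def by blast

lemma jset_iff: "jset k \<tau> = {0..k} \<longleftrightarrow> (\<forall>j\<in>{1..k}. is_involution_on {1..j} (initial_pattern \<tau> j))"
proof
  assume A: "jset k \<tau> = {0..k}"
  show "\<forall>j\<in>{1..k}. is_involution_on {1..j} (initial_pattern \<tau> j)"
  proof
    fix j assume j: "j \<in> {1..k}"
    then have "j \<in> jset k \<tau>" using A by simp
    then show "is_involution_on {1..j} (initial_pattern \<tau> j)" using j unfolding jset_mem by simp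
  qed
next
  assume H: "\<forall>j\<in>{1..k}. is_involution_on {1..j} (initial_pattern \<tau> j)"
  show "jset k \<tau> = {0..k}"
  proof (rule set_eqI)
    fix j
    show "j \<in> jset k \<tau> \<longleftrightarrow> j \<in> {0..k}"
      unfolding jset_mem using H by (cases "j = 0") auto
  qed
qed

lemma set_eq: "{\<tau>. \<tau> permutes {1..k} \<and> jset k \<tau> = {0..k}} = PP k"
proof -
  have "jset k \<tau> = {0..k} \<longleftrightarrow> good k \<tau>" for \<tau>
    by (simp only: jset_iff good_def inv_iff)
  then show ?thesis unfolding PP_def by blast
qed

lemma rk_perm:
  assumes p: "\<tau> permutes {1..j}" and i: "i \<in> {1..j}"
  shows "rk \<tau> j i = \<tau> i"
proof -
  have inj: "inj_on \<tau> {l \<in> {1..j}. \<tau> l \<le> \<tau> i}" using permutes_inj_on[OF p] by blast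
  have ti: "\<tau> i \<in> {1..j}" using permutes_in_image[OF p] i by auto
  have "\<tau> ` {l \<in> {1..j}. \<tau> l \<le> \<tau> i} = {1..\<tau> i}"
  proof
    show "\<tau> ` {l \<in> {1..j}. \<tau> l \<le> \<tau> i} \<subseteq> {1..\<tau> i}"
      using permutes_in_image[OF p] by fastforce
  next
    show "{1..\<tau> i} \<subseteq> \<tau> ` {l \<in> {1..j}. \<tau> l \<le> \<tau> i}"
    proof
      fix v assume v: "v \<in> {1..\<tau> i}"
      then have "v \<in> {1..j}" using ti by auto
      then obtain l where "l \<in> {1..j}" "\<tau> l = v" using permutes_image[OF p] by (metis imageE)
      then show "v \<in> \<tau> ` {l \<in> {1..j}. \<tau> l \<le> \<tau> i}" using v by auto
    qed
  qed
  then show ?thesis unfolding rk_def using card_image[OF inj] by simp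
qed

lemma rk_cong:
  assumes "\<forall>l\<in>{1..j}. \<tau> l = \<tau>' l" "i \<in> {1..j}"
  shows "rk \<tau> j i = rk \<tau>' j i"
  unfolding rk_def using assms by (metis (no_types, lifting) mem_Collect_eq Collect_cong)

lemma good_cong:
  assumes "\<forall>l\<in>{1..k}. \<tau> l = \<tau>' l" "good k \<tau>"
  shows "good k \<tau>'"
  unfolding good_def
proof (intro ballI)
  fix j i assume j: "j \<in> {1..k}" and i: "i \<in> {1..j}"
  have a: "\<forall>l\<in>{1..j}. \<tau> l = \<tau>' l" using assms(1) j by auto
  have "rk \<tau> j (rk \<tau> j i) = i" using assms(2) j i unfolding good_def by auto
  then show "rk \<tau>' j (rk \<tau>' j i) = i" using rk_cong[OF a] rk_bounds[OF i] i by metis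
qed

lemma good_mono: "good k \<tau> \<Longrightarrow> j \<le> k \<Longrightarrow> good j \<tau>"
  unfolding good_def by auto

lemma finite_PP: "finite (PP k)"
  unfolding PP_def by (rule finite_subset[OF _ finite_permutations[of "{1..k}"]]) auto

lemma PP0: "PP 0 = {id}"
  unfolding PP_def good_def by auto

lemma blk_rk:
  assumes m: "1 \<le> m" "m \<le> j" "j \<le> k" and p: "\<sigma> permutes {1..m-1}" and i: "i \<in> {1..j}"
  shows "rk (blk k m \<sigma>) j i = (if i < m then \<sigma> i else m + j - i)"
proof (cases "i < m")
  case True
  have sv: "\<And>l. l \<in> {1..m-1} \<Longrightarrow> \<sigma> l \<in> {1..m-1}" using permutes_in_image[OF p] by blast
  have im: "i \<in> {1..m-1}" using True i by auto
  have fi: "blk k m \<sigma> i = \<sigma> i" using True unfolding blk_def by simp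
  have "{l \<in> {1..j}. blk k m \<sigma> l \<le> blk k m \<sigma> i} = {l \<in> {1..m-1}. \<sigma> l \<le> \<sigma> i}"
  proof (rule set_eqI)
    fix l
    show "l \<in> {l \<in> {1..j}. blk k m \<sigma> l \<le> blk k m \<sigma> i} \<longleftrightarrow> l \<in> {l \<in> {1..m-1}. \<sigma> l \<le> \<sigma> i}"
    proof (cases "l < m")
      case True
      then show ?thesis using fi m unfolding blk_def by auto
    next
      case False
      have "\<sigma> i < m" using sv[OF im] by auto
      moreover have "l \<le> j \<Longrightarrow> blk k m \<sigma> l = k + m - l" using False m unfolding blk_def by auto
      ultimately show ?thesis using fi False m by auto
    qed
  qed
  then have "rk (blk k m \<sigma>) j i = rk \<sigma> (m-1) i" unfolding rk_def by simp
  also have "\<dots> = \<sigma> i" by (rule rk_perm[OF p im])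
  finally show ?thesis using True by simp
next
  case False
  have sv: "\<And>l. l \<in> {1..m-1} \<Longrightarrow> \<sigma> l \<in> {1..m-1}" using permutes_in_image[OF p] by blast
  have fi: "blk k m \<sigma> i = k + m - i" using False i m unfolding blk_def by simp
  have "{l \<in> {1..j}. blk k m \<sigma> l \<le> blk k m \<sigma> i} = {1..m-1} \<union> {i..j}"
  proof (rule set_eqI)
    fix l
    show "l \<in> {l \<in> {1..j}. blk k m \<sigma> l \<le> blk k m \<sigma> i} \<longleftrightarrow> l \<in> {1..m-1} \<union> {i..j}"
    proof (cases "l < m")
      case True
      have "l \<ge> 1 \<Longrightarrow> \<sigma> l < m"
      proof -
        assume "l \<ge> 1"
        then have "l \<in> {1..m-1}" using True by auto
        then have "\<sigma> l \<in> {1..m-1}" by (rule sv)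
        then show "\<sigma> l < m" by auto
      qed
      then show ?thesis using fi True m False i unfolding blk_def by auto
    next
      case F2: False
      have "l \<le> j \<Longrightarrow> blk k m \<sigma> l = k + m - l" using F2 m unfolding blk_def by auto
      then show ?thesis using fi False F2 m i by auto
    qed
  qed
  moreover have "card ({1..m-1} \<union> {i..j}) = (m - 1) + (Suc j - i)"
    by (subst card_Un_disjoint) (use False in auto)
  ultimately show ?thesis unfolding rk_def using False i m by simp
qed

lemma blk_PP:
  assumes m: "m \<in> {1..k}" and s: "\<sigma> \<in> PP (m-1)"
  shows "blk k m \<sigma> \<in> PP k"
proof -
  have p: "\<sigma> permutes {1..m-1}" and g: "good (m-1) \<sigma>" using s unfolding PP_def by auto
  have sv: "\<And>l. l \<in> {1..m-1} \<Longrightarrow> \<sigma> l \<in> {1..m-1}" using permutes_in_image[OF p] by blast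
  have s0: "\<sigma> 0 = 0" using permutes_not_in[OF p] by simp
  have sinv: "\<And>l. l \<in> {1..m-1} \<Longrightarrow> \<sigma> (\<sigma> l) = l"
  proof -
    fix l assume l: "l \<in> {1..m-1}"
    then have "m - 1 \<in> {1..m-1}" by auto
    then have "rk \<sigma> (m-1) (rk \<sigma> (m-1) l) = l" using g l unfolding good_def by blast
    then show "\<sigma> (\<sigma> l) = l" using rk_perm[OF p l] rk_perm[OF p sv[OF l]] by simp
  qed
  let ?f = "blk k m \<sigma>"
  have fin: "\<And>x. x \<in> {1..k} \<Longrightarrow> ?f x \<in> {1..k}"
  proof -
    fix x assume x: "x \<in> {1..k}"
    show "?f x \<in> {1..k}"
    proof (cases "x < m")
      case True
      then have "x \<in> {1..m-1}" using x by auto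
      then have "\<sigma> x \<in> {1..m-1}" by (rule sv)
      then show ?thesis using True x m unfolding blk_def by auto
    next
      case False then show ?thesis using x m unfolding blk_def by auto
    qed
  qed
  have fout: "\<And>x. x \<notin> {1..k} \<Longrightarrow> ?f x = x"
  proof -
    fix x assume "x \<notin> {1..k}"
    then have "x = 0 \<or> x > k" by auto
    then show "?f x = x" using m s0 unfolding blk_def by auto
  qed
  have finv: "\<And>x. x \<in> {1..k} \<Longrightarrow> ?f (?f x) = x"
  proof -
    fix x assume x: "x \<in> {1..k}"
    show "?f (?f x) = x"
    proof (cases "x < m")
      case True
      then have "x \<in> {1..m-1}" using x by auto
      then show ?thesis using sv sinv True unfolding blk_def by force
    next
      case False then show ?thesis using x m unfolding blk_def by auto
    qed
  qed
  have perm: "?f permutes {1..k}" by (rule invol_permutes) (use fin fout finv in auto)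
  have good: "good k ?f"
    unfolding good_def
  proof (intro ballI)
    fix j i assume j: "j \<in> {1..k}" and i: "i \<in> {1..j}"
    show "rk ?f j (rk ?f j i) = i"
    proof (cases "j < m")
      case True
      have a: "\<forall>l\<in>{1..j}. \<sigma> l = ?f l" using True unfolding blk_def by auto
      have "good j \<sigma>" using good_mono[OF g] True by simp
      then have "good j ?f" using good_cong[OF a] by blast
      then show ?thesis using i unfolding good_def using j by (metis atLeastAtMost_iff le_refl i)
    next
      case False
      then have mj: "1 \<le> m" "m \<le> j" "j \<le> k" using m j by auto
      have r1: "rk ?f j i = (if i < m then \<sigma> i else m + j - i)" by (rule blk_rk[OF mj p i])
      have ri: "rk ?f j i \<in> {1..j}" by (rule rk_bounds[OF i])
      have r2: "rk ?f j (rk ?f j i) = (if rk ?f j i < m then \<sigma> (rk ?f j i) else m + j - rk ?f j i)"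
        by (rule blk_rk[OF mj p ri])
      show ?thesis
      proof (cases "i < m")
        case True
        then have "i \<in> {1..m-1}" using i by auto
        then show ?thesis using r1 r2 sv sinv True by force
      next
        case F: False
        then show ?thesis using r1 r2 i mj by auto
      qed
    qed
  qed
  show ?thesis unfolding PP_def using perm good by blast
qed

lemma PP_blk:
  assumes k: "1 \<le> k" and t: "\<tau> \<in> PP k"
  shows "\<exists>m\<in>{1..k}. \<exists>\<sigma>\<in>PP (m-1). \<tau> = blk k m \<sigma>"
proof -
  have p: "\<tau> permutes {1..k}" and g: "good k \<tau>" using t unfolding PP_def by auto
  have tv: "\<And>l. l \<in> {1..k} \<Longrightarrow> \<tau> l \<in> {1..k}" using permutes_in_image[OF p] by blast
  have inj: "inj \<tau>" by (rule permutes_inj[OF p])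
  have tinv: "\<And>l. l \<in> {1..k} \<Longrightarrow> \<tau> (\<tau> l) = l"
  proof -
    fix l assume l: "l \<in> {1..k}"
    have "k \<in> {1..k}" using k by auto
    then have "rk \<tau> k (rk \<tau> k l) = l" using g l unfolding good_def by blast
    then show "\<tau> (\<tau> l) = l" using rk_perm[OF p l] rk_perm[OF p tv[OF l]] by simp
  qed
  define m where "m = \<tau> k"
  have kk: "k \<in> {1..k}" using k by auto
  have mk: "m \<in> {1..k}" unfolding m_def using tv[OF kk] .
  have tm: "\<tau> m = k" unfolding m_def using tinv[OF kk] .
  have rjj: "\<And>j. m \<le> j \<Longrightarrow> j \<le> k \<Longrightarrow> rk \<tau> j j = m"
  proof -
    fix j assume j: "m \<le> j" "j \<le> k"
    have "{l \<in> {1..j}. \<tau> l \<le> \<tau> m} = {1..j}"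
    proof (rule set_eqI)
      fix l show "l \<in> {l \<in> {1..j}. \<tau> l \<le> \<tau> m} \<longleftrightarrow> l \<in> {1..j}"
      proof
        assume "l \<in> {1..j}"
        then have "l \<in> {1..k}" using j by auto
        then show "l \<in> {l \<in> {1..j}. \<tau> l \<le> \<tau> m}" using tv[of l] tm \<open>l \<in> {1..j}\<close> by auto
      qed auto
    qed
    then have "rk \<tau> j m = j" unfolding rk_def by simp
    moreover have "m \<in> {1..j}" using mk j by auto
    moreover have "j \<in> {1..k}" using mk j by auto
    ultimately show "rk \<tau> j j = m" using g unfolding good_def by metis
  qed
  have C: "m + d \<le> k \<Longrightarrow> (\<forall>l\<in>{1..m-1}. \<forall>i\<in>{m..m+d}. \<tau> l < \<tau> i) \<and> (\<forall>i\<in>{m..<m+d}. \<tau> (Suc i) < \<tau> i)" for d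
  proof (induction d)
    case 0
    have "\<forall>l\<in>{1..m-1}. \<tau> l < \<tau> m"
    proof
      fix l assume l: "l \<in> {1..m-1}"
      then have "l \<in> {1..k}" "l \<noteq> m" using mk by auto
      then have "\<tau> l \<le> k" "\<tau> l \<noteq> \<tau> m" using tv[of l] inj by (auto simp: inj_eq)
      then show "\<tau> l < \<tau> m" using tm by simp
    qed
    then show ?case by simp
  next
    case (Suc d)
    then have IH: "\<forall>l\<in>{1..m-1}. \<forall>i\<in>{m..m+d}. \<tau> l < \<tau> i" "\<forall>i\<in>{m..<m+d}. \<tau> (Suc i) < \<tau> i"
      by auto
    define j where "j = m + Suc d"
    have jk: "j \<le> k" using Suc.prems j_def by simp
    define S where "S = {l \<in> {1..j}. \<tau> l \<le> \<tau> j}"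
    have cS: "card S = m" using rjj[of j] jk unfolding S_def rk_def j_def by simp
    have fS: "finite S" unfolding S_def by simp
    have noB: "\<And>i. i \<in> {m..m+d} \<Longrightarrow> \<not> \<tau> i \<le> \<tau> j"
    proof
      fix i assume i: "i \<in> {m..m+d}" and le: "\<tau> i \<le> \<tau> j"
      have sub: "{1..m-1} \<union> {i, j} \<subseteq> S"
      proof
        fix l assume l: "l \<in> {1..m-1} \<union> {i, j}"
        show "l \<in> S"
        proof (cases "l \<in> {1..m-1}")
          case True
          then have "\<tau> l < \<tau> i" using IH(1) i by blast
          then show ?thesis unfolding S_def using True le j_def by auto
        next
          case False
          then have "l = i \<or> l = j" using l by blast
          then show ?thesis unfolding S_def using le i j_def mk by auto
        qed
      qed
      have "card ({1..m-1} \<union> {i, j}) = (m - 1) + 2"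
        by (subst card_Un_disjoint) (use i j_def in auto)
      moreover have "card ({1..m-1} \<union> {i, j}) \<le> card S" by (rule card_mono[OF fS sub])
      ultimately show False using cS mk by simp
    qed
    have sub2: "S \<subseteq> {1..m-1} \<union> {j}"
    proof
      fix l assume l: "l \<in> S"
      then have l1: "l \<in> {1..j}" "\<tau> l \<le> \<tau> j" unfolding S_def by auto
      show "l \<in> {1..m-1} \<union> {j}"
      proof (cases "l < m")
        case True then show ?thesis using l1 by auto
      next
        case False
        show ?thesis
        proof (rule ccontr)
          assume "l \<notin> {1..m-1} \<union> {j}"
          then have "l \<in> {m..m+d}" using l1 False j_def by auto
          then show False using noB l1 by blast
        qed
      qed
    qed
    have "card ({1..m-1} \<union> {j}) = m"
      by (subst card_Un_disjoint) (use mk j_def in auto)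
    then have Seq: "S = {1..m-1} \<union> {j}"
      using card_subset_eq[OF _ sub2] cS by simp
    have new1: "\<forall>l\<in>{1..m-1}. \<tau> l < \<tau> j"
    proof
      fix l assume l: "l \<in> {1..m-1}"
      then have "l \<in> S" using Seq by blast
      then have "\<tau> l \<le> \<tau> j" unfolding S_def by auto
      moreover have "l \<noteq> j" using l j_def by auto
      then have "\<tau> l \<noteq> \<tau> j" using inj by (auto simp: inj_eq)
      ultimately show "\<tau> l < \<tau> j" by simp
    qed
    have new2: "\<tau> j < \<tau> (m + d)" using noB[of "m+d"] by auto
    show ?case
    proof
      show "\<forall>l\<in>{1..m-1}. \<forall>i\<in>{m..m + Suc d}. \<tau> l < \<tau> i"
      proof (intro ballI)
        fix l i assume l: "l \<in> {1..m-1}" and i: "i \<in> {m..m + Suc d}"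
        show "\<tau> l < \<tau> i"
        proof (cases "i = j")
          case True then show ?thesis using new1 l by simp
        next
          case False then have "i \<in> {m..m+d}" using i j_def by auto
          then show ?thesis using IH(1) l by blast
        qed
      qed
    next
      show "\<forall>i\<in>{m..<m + Suc d}. \<tau> (Suc i) < \<tau> i"
      proof
        fix i assume i: "i \<in> {m..<m + Suc d}"
        show "\<tau> (Suc i) < \<tau> i"
        proof (cases "i = m + d")
          case True then show ?thesis using new2 j_def by simp
        next
          case False then have "i \<in> {m..<m+d}" using i by auto
          then show ?thesis using IH(2) by blast
        qed
      qed
    qed
  qed
  have Ck: "(\<forall>l\<in>{1..m-1}. \<forall>i\<in>{m..k}. \<tau> l < \<tau> i) \<and> (\<forall>i\<in>{m..<k}. \<tau> (Suc i) < \<tau> i)"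
    using C[of "k - m"] mk by simp
  then have AB: "\<And>l i. l \<in> {1..m-1} \<Longrightarrow> i \<in> {m..k} \<Longrightarrow> \<tau> l < \<tau> i"
    and dec: "\<And>i. i \<in> {m..<k} \<Longrightarrow> \<tau> (Suc i) < \<tau> i" by blast+
  have tk: "\<tau> k = m" unfolding m_def ..
  have up: "m + d \<le> k \<Longrightarrow> \<tau> (m + d) + d \<le> k" for d
  proof (induction d)
    case 0 then show ?case using tm by simp
  next
    case (Suc d)
    then have "\<tau> (Suc (m + d)) < \<tau> (m + d)" using dec[of "m+d"] by simp
    then show ?case using Suc by simp
  qed
  have lo: "d \<le> k - m \<Longrightarrow> m + d \<le> \<tau> (k - d)" for d
  proof (induction d)
    case 0 then show ?case using tk by simp
  next
    case (Suc d)
    then have "k - Suc d \<in> {m..<k}" using mk by auto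
    then have "\<tau> (Suc (k - Suc d)) < \<tau> (k - Suc d)" by (rule dec)
    moreover have "Suc (k - Suc d) = k - d" using Suc.prems mk by auto
    ultimately show ?case using Suc by simp
  qed
  have exact: "\<And>i. i \<in> {m..k} \<Longrightarrow> \<tau> i = k + m - i"
  proof -
    fix i assume i: "i \<in> {m..k}"
    have "\<tau> (m + (i - m)) + (i - m) \<le> k" using up[of "i - m"] i by auto
    moreover have "m + (k - i) \<le> \<tau> (k - (k - i))" using lo[of "k - i"] i by auto
    ultimately show "\<tau> i = k + m - i" using i by auto
  qed
  have small: "\<And>l. l \<in> {1..m-1} \<Longrightarrow> \<tau> l \<in> {1..m-1}"
  proof -
    fix l assume l: "l \<in> {1..m-1}"
    then have "\<tau> l < \<tau> k" using AB[of l k] mk by auto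
    moreover have "\<tau> l \<ge> 1" using tv[of l] l mk by auto
    ultimately show "\<tau> l \<in> {1..m-1}" using tk by auto
  qed
  have t0: "\<tau> 0 = 0" using permutes_not_in[OF p] by simp
  define \<sigma> where "\<sigma> = (\<lambda>i. if i < m then \<tau> i else i)"
  have sp: "\<sigma> permutes {1..m-1}"
  proof (rule invol_permutes)
    fix x assume "x \<notin> {1..m-1}"
    then have "x = 0 \<or> x \<ge> m" by auto
    then show "\<sigma> x = x" unfolding \<sigma>_def using t0 by auto
  next
    fix x assume x: "x \<in> {1..m-1}"
    then show "\<sigma> x \<in> {1..m-1}" unfolding \<sigma>_def using small by auto
  next
    fix x assume x: "x \<in> {1..m-1}"
    then have "\<tau> x \<in> {1..m-1}" by (rule small)
    moreover have "x \<in> {1..k}" using x mk by auto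
    ultimately show "\<sigma> (\<sigma> x) = x" unfolding \<sigma>_def using x tinv by auto
  qed
  have sg: "good (m-1) \<sigma>"
  proof (rule good_cong)
    show "\<forall>l\<in>{1..m-1}. \<tau> l = \<sigma> l" unfolding \<sigma>_def by auto
    show "good (m-1) \<tau>" by (rule good_mono[OF g]) (use mk in auto)
  qed
  have "\<tau> = blk k m \<sigma>"
  proof
    fix x
    show "\<tau> x = blk k m \<sigma> x"
    proof (cases "x < m")
      case True then show ?thesis unfolding blk_def \<sigma>_def by simp
    next
      case False
      show ?thesis
      proof (cases "x \<le> k")
        case True then show ?thesis using False exact[of x] unfolding blk_def by auto
      next
        case F2: False
        then show ?thesis using False permutes_not_in[OF p, of x] unfolding blk_def by auto
      qed
    qed
  qed
  moreover have "\<sigma> \<in> PP (m-1)" unfolding PP_def using sp sg by blast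
  ultimately show ?thesis using mk by blast
qed

lemma card_rec:
  assumes k: "1 \<le> k"
  shows "card (PP k) = (\<Sum>m\<in>{1..k}. card (PP (m-1)))"
proof -
  let ?g = "\<lambda>(m, \<sigma>). blk k m \<sigma>"
  let ?A = "SIGMA m:{1..k}. PP (m-1)"
  have img: "?g ` ?A = PP k"
  proof
    show "?g ` ?A \<subseteq> PP k"
    proof (rule image_subsetI)
      fix x assume "x \<in> ?A"
      then obtain m \<sigma> where "x = (m, \<sigma>)" "m \<in> {1..k}" "\<sigma> \<in> PP (m-1)" by blast
      then show "?g x \<in> PP k" using blk_PP by simp
    qed
  next
    show "PP k \<subseteq> ?g ` ?A"
    proof
      fix \<tau> assume "\<tau> \<in> PP k"
      then obtain m \<sigma> where "m \<in> {1..k}" "\<sigma> \<in> PP (m-1)" "\<tau> = blk k m \<sigma>"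
        using PP_blk[OF k] by blast
      then show "\<tau> \<in> ?g ` ?A" by (intro image_eqI[where x="(m, \<sigma>)"]) auto
    qed
  qed
  have val: "\<And>m m' \<sigma>'. m \<in> {1..k} \<Longrightarrow> m' \<in> {1..k} \<Longrightarrow> \<sigma>' \<in> PP (m'-1) \<Longrightarrow> m < m' \<Longrightarrow> blk k m' \<sigma>' m < k"
  proof -
    fix m m' \<sigma>' assume a: "m \<in> {1..k}" "m' \<in> {1..k}" "\<sigma>' \<in> PP (m'-1)" "m < m'"
    have "\<sigma>' permutes {1..m'-1}" using a(3) unfolding PP_def by auto
    moreover have "m \<in> {1..m'-1}" using a by auto
    ultimately have "\<sigma>' m \<in> {1..m'-1}" using permutes_in_image[of \<sigma>' "{1..m'-1}" m] by simp
    moreover have "blk k m' \<sigma>' m = \<sigma>' m" using a(4) unfolding blk_def by simp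
    ultimately show "blk k m' \<sigma>' m < k" using a(2) by auto
  qed
  have vm: "\<And>m \<sigma>. m \<in> {1..k} \<Longrightarrow> blk k m \<sigma> m = k" unfolding blk_def by simp
  have inj: "inj_on ?g ?A"
  proof (rule inj_onI)
    fix x y assume x: "x \<in> ?A" and y: "y \<in> ?A" and e: "?g x = ?g y"
    obtain m \<sigma> where xm: "x = (m, \<sigma>)" "m \<in> {1..k}" "\<sigma> \<in> PP (m-1)" using x by auto
    obtain m' \<sigma>' where ym: "y = (m', \<sigma>')" "m' \<in> {1..k}" "\<sigma>' \<in> PP (m'-1)" using y by auto
    have e2: "blk k m \<sigma> = blk k m' \<sigma>'" using e xm ym by simp
    have "m = m'"
    proof (rule ccontr)
      assume "m \<noteq> m'"
      then consider "m < m'" | "m' < m" by linarith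
      then show False
      proof cases
        case 1
        have "blk k m \<sigma> m = blk k m' \<sigma>' m" using e2 by simp
        then show False using val[OF xm(2) ym(2) ym(3) 1] vm[OF xm(2), of \<sigma>] by linarith
      next
        case 2
        have "blk k m \<sigma> m' = blk k m' \<sigma>' m'" using e2 by simp
        then show False using val[OF ym(2) xm(2) xm(3) 2] vm[OF ym(2), of \<sigma>'] by linarith
      qed
    qed
    moreover have "\<sigma> = \<sigma>'"
    proof
      fix i
      show "\<sigma> i = \<sigma>' i"
      proof (cases "i < m")
        case True
        then show ?thesis using fun_cong[OF e2, of i] \<open>m = m'\<close> unfolding blk_def by simp
      next
        case False
        have "\<sigma> permutes {1..m-1}" "\<sigma>' permutes {1..m-1}" using xm ym \<open>m = m'\<close> unfolding PP_def by auto
        moreover have "i \<notin> {1..m-1}" using False by auto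
        ultimately show ?thesis using permutes_not_in[of \<sigma> "{1..m-1}" i] permutes_not_in[of \<sigma>' "{1..m-1}" i] by simp
      qed
    qed
    ultimately show "x = y" using xm ym by simp
  qed
  have "card (PP k) = card ?A" using card_image[OF inj] img by simp
  also have "\<dots> = (\<Sum>m\<in>{1..k}. card (PP (m-1)))"
    by (rule card_SigmaI) (auto intro: finite_PP)
  finally show ?thesis .
qed

lemma card_PP: "k \<ge> 1 \<Longrightarrow> card (PP k) = 2 ^ (k - 1)"
proof (induction k rule: less_induct)
  case (less k)
  have h: "\<And>m. m \<in> {1..k} \<Longrightarrow> card (PP (m-1)) = (if m = 1 then 1 else 2 ^ (m - 2))"
  proof -
    fix m assume m: "m \<in> {1..k}"
    show "card (PP (m-1)) = (if m = 1 then 1 else 2 ^ (m - 2))"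
    proof (cases "m = 1")
      case True then show ?thesis using PP0 by simp
    next
      case False
      then have "m - 1 < k" "1 \<le> m - 1" using m by auto
      then have "card (PP (m-1)) = 2 ^ (m - 1 - 1)" using less.IH by blast
      moreover have "m - 1 - 1 = m - 2" by simp
      ultimately show ?thesis using False by simp
    qed
  qed
  have s: "(\<Sum>m\<in>{1..n}. (if m = 1 then 1 else 2 ^ (m - 2)) :: nat) = 2 ^ (n - 1)" if "n \<ge> 1" for n
    using that
  proof (induction n rule: dec_induct)
    case base then show ?case by simp
  next
    case (step n)
    have "(\<Sum>m\<in>{1..Suc n}. (if m = 1 then 1 else 2 ^ (m - 2)) :: nat) =
      (\<Sum>m\<in>{1..n}. (if m = 1 then 1 else 2 ^ (m - 2))) + 2 ^ (n - 1)"
      using step by simp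
    also have "\<dots> = 2 ^ n" using step by (cases n) auto
    finally show ?case by simp
  qed
  have "card (PP k) = (\<Sum>m\<in>{1..k}. card (PP (m-1)))" by (rule card_rec[OF less.prems])
  also have "\<dots> = (\<Sum>m\<in>{1..k}. (if m = 1 then 1 else 2 ^ (m - 2)))" using h by (rule sum.cong[OF refl])
  also have "\<dots> = 2 ^ (k - 1)" using s less.prems by blast
  finally show ?case .
qed

theorem mainTheorem9:
  fixes k :: nat
  assumes "k \<ge> 1"
  shows "card {\<tau>. \<tau> permutes {1..k} \<and> jset k \<tau> = {0..k}} = 2 ^ (k - 1)"
  unfolding set_eq using card_PP[OF assms] .

end
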